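(* Let $X$ be a smooth projective surface over $\mathbb{C}$, $H$ an integral ample divisor class, and consider $\sigma_{\alpha,\beta}=\sigma_{\alpha H,\beta H}$ ($\alpha>0$, $\beta\in\mathbb{R}$). Let $0\to F\to E\to G\to 0$ be a sequence which is a short exact sequence in $\mathrm{Coh}^\beta(X)$ for every $(\alpha,\beta)$ on the numerical wall $W=\{(\alpha,\beta):\nu_{\alpha,\beta}(F)=\nu_{\alpha,\beta}(E)\}$, and assume $W$ is a non-empty semicircle with radius $\rho_W$ and center on the $\beta$-axis. Assume $\mathrm{ch}_0(F)>\mathrm{ch}_0(E)\ge 0$. Then $$\rho_W^2\le\frac{\overline{\Delta}_H(E)}{4\,H^2\mathrm{ch}_0(F)\,\bigl(H^2\mathrm{ch}_0(F)-H^2\mathrm{ch}_0(E)\bigr)}.$$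
   Context: $\mathrm{ch}^\beta=\mathrm{ch}\cdot e^{-\beta H}$. $\mathrm{Coh}^\beta(X)$ is the tilt of $\mathrm{Coh}(X)$ consisting of objects $E$ with $\mathcal{H}^i(E)=0$ for $i\neq -1,0$, all slope HN factors of $\mathcal{H}^{-1}(E)$ having $H\cdot\mathrm{ch}^\beta_1/\mathrm{ch}_0\le0$ and all slope HN factors of $\mathcal{H}^0(E)$ having $H\cdot\mathrm{ch}^\beta_1/\mathrm{ch}_0>0$ (torsion sheaves have slope $+\infty$); in particular $H\cdot\mathrm{ch}^\beta_1\ge0$ on $\mathrm{Coh}^\beta(X)$. $\nu_{\alpha,\beta}=\frac{\mathrm{ch}^\beta_2-\frac{\alpha^2H^2}{2}\mathrm{ch}_0}{H\cdot\mathrm{ch}^\beta_1}$. $\overline{\Delta}_H=(H\cdot\mathrm{ch}_1)^2-2H^2\,\mathrm{ch}_0\,\mathrm{ch}_2$. *)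

theory Defs
  imports Complex_Main
begin

(* Numerical Chern data of an object on the surface X relative to the ample class H:
   a triple (ch_0, H.ch_1, ch_2).  The real number d stands for H^2 > 0. *)
type_synonym chern = "real \<times> real \<times> real"

definition ch0 :: "chern \<Rightarrow> real" where "ch0 v = fst v"
definition Hch1 :: "chern \<Rightarrow> real" where "Hch1 v = fst (snd v)"
definition ch2 :: "chern \<Rightarrow> real" where "ch2 v = snd (snd v)"

definition Hch1_beta :: "real \<Rightarrow> real \<Rightarrow> chern \<Rightarrow> real" where
  "Hch1_beta d \<beta> v = Hch1 v - \<beta> * d * ch0 v"

definition ch2_beta :: "real \<Rightarrow> real \<Rightarrow> chern \<Rightarrow> real" where
  "ch2_beta d \<beta> v = ch2 v - \<beta> * Hch1 v + \<beta>^2 / 2 * d * ch0 v"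

definition nu_num :: "real \<Rightarrow> real \<Rightarrow> real \<Rightarrow> chern \<Rightarrow> real" where
  "nu_num d \<alpha> \<beta> v = ch2_beta d \<beta> v - \<alpha>^2 * d / 2 * ch0 v"

definition nu :: "real \<Rightarrow> real \<Rightarrow> real \<Rightarrow> chern \<Rightarrow> real" where
  "nu d \<alpha> \<beta> v = nu_num d \<alpha> \<beta> v / Hch1_beta d \<beta> v"

definition Delta_H :: "real \<Rightarrow> chern \<Rightarrow> real" where
  "Delta_H d v = (Hch1 v)^2 - 2 * d * ch0 v * ch2 v"

(* numerical wall {(alpha,beta) : alpha > 0, nu(F) = nu(E)}, with the equality of slopes
   written in cross-multiplied form (slope +infinity when H.ch_1^beta = 0) *)
definition numerical_wall :: "real \<Rightarrow> chern \<Rightarrow> chern \<Rightarrow> (real \<times> real) set" where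
  "numerical_wall d F E = {(\<alpha>, \<beta>). \<alpha> > 0 \<and>
      nu_num d \<alpha> \<beta> F * Hch1_beta d \<beta> E = nu_num d \<alpha> \<beta> E * Hch1_beta d \<beta> F}"

end

theory Submission
  imports Defs
begin

theorem lemma7p2:
  fixes d s \<rho> :: real and F E G :: chern
  assumes H2_pos: "d > 0"
    and ses_ch0: "ch0 E = ch0 F + ch0 G"
    and ses_ch1: "Hch1 E = Hch1 F + Hch1 G"
    and ses_ch2: "ch2 E = ch2 F + ch2 G"
    and wall_semicircle: "numerical_wall d F E = {(\<alpha>, \<beta>). \<alpha> > 0 \<and> (\<beta> - s)^2 + \<alpha>^2 = \<rho>^2}"
    and rho_pos: "\<rho> > 0"
    and in_tilt: "\<forall>(\<alpha>, \<beta>) \<in> numerical_wall d F E.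
        Hch1_beta d \<beta> F \<ge> 0 \<and> Hch1_beta d \<beta> E \<ge> 0 \<and> Hch1_beta d \<beta> G \<ge> 0"
    and rank: "ch0 F > ch0 E" "ch0 E \<ge> 0"
  shows "\<rho>^2 \<le> Delta_H d E / (4 * (d * ch0 F) * (d * ch0 F - d * ch0 E))"
proof -
  obtain rF cF eF where F: "F = (rF,cF,eF)" by (cases F) auto
  obtain rE cE eE where E: "E = (rE,cE,eE)" by (cases E) auto
  obtain rG cG eG where G: "G = (rG,cG,eG)" by (cases G) auto
  have hF: "ch0 F = rF" "Hch1 F = cF" "ch2 F = eF" by (simp_all add: F ch0_def Hch1_def ch2_def)
  have hE: "ch0 E = rE" "Hch1 E = cE" "ch2 E = eE" by (simp_all add: E ch0_def Hch1_def ch2_def)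
  have hG: "ch0 G = rG" "Hch1 G = cG" "ch2 G = eG" by (simp_all add: G ch0_def Hch1_def ch2_def)
  define xF where "xF = cF - s*d*rF"
  define xE where "xE = cE - s*d*rE"
  define xG where "xG = cG - s*d*rG"
  define yF where "yF = eF - s*cF + s^2*d*rF/2"
  define yE where "yE = eE - s*cE + s^2*d*rE/2"
  define K where "K = rF*xE - rE*xF"
  define L where "L = rF*yE - rE*yF"
  define M where "M = yF*xE - yE*xF"
  have rFE: "rF > rE" "rE \<ge> 0" using rank hF hE by auto
  have rG: "rG = rE - rF" using ses_ch0 hF hE hG by simp
  have cG0: "cE = cF + cG" using ses_ch1 hF hE hG by simp
  have cG: "xG = xE - xF" unfolding xG_def xE_def xF_def rG cG0 by (simp add: algebra_simps)
  have fexp: "nu_num d \<alpha> (s+t) F * Hch1_beta d (s+t) E - nu_num d \<alpha> (s+t) E * Hch1_beta d (s+t) F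
      = -(d*K/2)*(\<alpha>^2+t^2) + t*d*L + M" for \<alpha> t
    unfolding nu_num_def Hch1_beta_def ch2_beta_def hF hE K_def L_def M_def xF_def xE_def yF_def yE_def
    by (simp add: field_simps power2_eq_square)
  have wall_iff: "(\<alpha>, s+t) \<in> numerical_wall d F E \<longleftrightarrow> \<alpha> > 0 \<and> -(d*K/2)*(\<alpha>^2+t^2) + t*d*L + M = 0" for \<alpha> t
    unfolding numerical_wall_def using fexp[of \<alpha> t] by auto
  have mem: "(sqrt (\<rho>^2 - t^2), s+t) \<in> numerical_wall d F E" if "-\<rho> < t" "t < \<rho>" for t
  proof -
    have "\<bar>t\<bar> < \<rho>" using that by auto
    hence "\<bar>t\<bar>^2 < \<rho>^2" by (intro power_strict_mono) auto
    hence "t^2 < \<rho>^2" by simp 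
    hence "sqrt (\<rho>^2 - t^2) > 0" "(sqrt (\<rho>^2 - t^2))^2 = \<rho>^2 - t^2" by auto
    thus ?thesis unfolding wall_semicircle by auto
  qed
  have memf: "-(d*K/2)*\<rho>^2 + t*d*L + M = 0" if "-\<rho> < t" "t < \<rho>" for t
  proof -
    have "\<bar>t\<bar> < \<rho>" using that by auto
    hence "\<bar>t\<bar>^2 < \<rho>^2" by (intro power_strict_mono) auto
    hence "t^2 < \<rho>^2" by simp
    hence "(sqrt (\<rho>^2 - t^2))^2 = \<rho>^2 - t^2" by auto
    thus ?thesis using mem[OF that] wall_iff[of "sqrt (\<rho>^2 - t^2)" t] by auto
  qed
  have M0: "M = d*K*\<rho>^2/2" using memf[of 0] rho_pos by simp
  have "-(d*K/2)*\<rho>^2 + (\<rho>/2)*d*L + M = 0" using memf[of "\<rho>/2"] rho_pos by simp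
  hence L0: "L = 0" using M0 rho_pos H2_pos by simp
  have "(2*\<rho>, s+0) \<notin> numerical_wall d F E" unfolding wall_semicircle using rho_pos
    by (simp add: power2_eq_square)
  hence "-(d*K/2)*((2*\<rho>)^2+0^2) + 0*d*L + M \<noteq> 0" using wall_iff[of "2*\<rho>" 0] rho_pos by auto
  hence K0: "K \<noteq> 0" using M0 by auto
  have yF: "yF = rF*d*\<rho>^2/2"
  proof -
    have "rF*M = yF*K" using L0 unfolding M_def K_def L_def by (simp add: algebra_simps)
    hence "yF*K = (rF*d*\<rho>^2/2)*K" using M0 by (auto simp: algebra_simps)
    thus ?thesis using K0 by simp
  qed
  have yE: "yE = rE*d*\<rho>^2/2"
  proof -
    have "rF*yE = rF*(rE*d*\<rho>^2/2)" using L0 yF unfolding L_def by (simp add: algebra_simps)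
    thus ?thesis using rFE by simp
  qed
  have xFb: "xF \<ge> \<rho>*d*rF"
  proof (rule ccontr)
    assume a: "\<not> ?thesis"
    define q where "q = max (xF/(d*rF)) 0"
    have dr: "d*rF > 0" using H2_pos rFE by simp
    have "xF/(d*rF) < \<rho>" using a dr by (simp add: divide_less_eq mult.commute mult.left_commute)
    hence q: "q < \<rho>" "q \<ge> 0" "q \<ge> xF/(d*rF)" using rho_pos unfolding q_def by auto
    define t where "t = (q+\<rho>)/2"
    have qt: "q < t" "-\<rho> < t" "t < \<rho>" using q rho_pos unfolding t_def by (auto simp: field_simps)
    have t: "-\<rho> < t" "t < \<rho>" "t > xF/(d*rF)" using qt q(3) by linarith+
    have "Hch1_beta d (s+t) F \<ge> 0" using in_tilt mem[OF t(1,2)] by auto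
    hence "xF - t*d*rF \<ge> 0" unfolding Hch1_beta_def hF xF_def by (simp add: algebra_simps)
    moreover have "xF < t*(d*rF)" using t(3) dr by (simp add: divide_less_eq)
    ultimately show False by (simp add: algebra_simps)
  qed
  have xGb: "xG \<ge> \<rho>*d*(rF-rE)"
  proof (rule ccontr)
    assume a: "\<not> ?thesis"
    define q where "q = max (xG/(d*(rF-rE))) 0"
    have dr: "d*(rF-rE) > 0" using H2_pos rFE by simp
    have "xG/(d*(rF-rE)) < \<rho>" using a dr by (simp add: divide_less_eq mult.commute mult.left_commute)
    hence q: "q < \<rho>" "q \<ge> 0" "q \<ge> xG/(d*(rF-rE))" using rho_pos unfolding q_def by auto
    define t where "t = -(q+\<rho>)/2"
    have qt: "q < -t" "-\<rho> < t" "t < \<rho>" using q rho_pos unfolding t_def by (auto simp: field_simps)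
    have t: "-\<rho> < t" "t < \<rho>" "-t > xG/(d*(rF-rE))" using qt q(3) by linarith+
    have "Hch1_beta d (s+t) G \<ge> 0" using in_tilt mem[OF t(1,2)] by auto
    hence "xG + t*d*(rF-rE) \<ge> 0" unfolding Hch1_beta_def hG xG_def rG by (simp add: algebra_simps)
    moreover have "xG < (-t)*(d*(rF-rE))" using t(3) dr by (simp add: divide_less_eq)
    ultimately show False by (simp add: algebra_simps)
  qed
  have xEb: "xE \<ge> \<rho>*d*(2*rF-rE)" using xFb xGb cG by (simp add: algebra_simps)
  have nn: "\<rho>*d*(2*rF-rE) \<ge> 0" using rho_pos H2_pos rFE by simp
  have sq: "(\<rho>*d*(2*rF-rE))^2 \<le> xE^2" using xEb nn by (simp add: power_mono)
  have Dl: "Delta_H d E = xE^2 - 2*d*rE*yE"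
    unfolding Delta_H_def hE xE_def yE_def by (simp add: algebra_simps power2_eq_square)
  have den: "4 * (d * ch0 F) * (d * ch0 F - d * ch0 E) > 0" using H2_pos rFE hF hE by simp
  have "\<rho>^2 * (4 * (d * ch0 F) * (d * ch0 F - d * ch0 E)) \<le> Delta_H d E"
    unfolding Dl yE hF hE using sq by (simp add: algebra_simps power2_eq_square)
  thus ?thesis using den by (simp add: le_divide_eq)
qed

end
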